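(* Let $n$ be an even positive integer and let $\mathbb{F}$ be a field with $\operatorname{char}(\mathbb{F})\neq 2$ and $|\mathbb{F}|\geq n^2+1$. Let $Q_n$ denote the set of all $n\times n$ skew-symmetric matrices over $\mathbb{F}$. If $a,b\in Q_n$ satisfy $\det(a+x)=\det(b+x)$ for all $x\in Q_n$, then $a=b$.
   Context: A matrix $x$ is skew-symmetric if $x^t=-x$. *)

theory Defs
  imports "HOL-Analysis.Analysis"
begin

definition skew_symmetric :: "'a::ring_1 ^'n^'n \<Rightarrow> bool" where
  "skew_symmetric x \<longleftrightarrow> transpose x = - x"

end

theory Submission
  imports Defs "HOL-Computational_Algebra.Polynomial"
begin


definition detpoly :: "'a::comm_ring_1^'n^'n \<Rightarrow> 'a^'n^'n \<Rightarrow> 'a poly" where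
 "detpoly A B = (\<Sum>p\<in>{p. p permutes (UNIV::'n set)}. of_int (sign p) * (\<Prod>i\<in>UNIV. [:A$i$p i, B$i$p i:]))"

lemma poly_detpoly: "poly (detpoly A B) t = det (\<chi> i j. A$i$j + t * B$i$j)"
  unfolding detpoly_def det_def by (simp add: poly_sum poly_prod)

lemma degree_detpoly: "degree (detpoly (A::'a::comm_ring_1^'n^'n) B) \<le> CARD('n)"
  unfolding detpoly_def
proof (rule degree_sum_le)
  fix p assume "p \<in> {p. p permutes (UNIV::'n set)}"
  have d1: "degree [:A$i$p i, B$i$p i:] \<le> 1" for i by (cases "B$i$p i = 0") auto
  have "degree (\<Prod>i\<in>UNIV. [:A$i$p i, B$i$p i:]) \<le> (\<Sum>i\<in>(UNIV::'n set). 1)"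
    by (rule order.trans[OF degree_prod_sum_le]) (simp, simp only: o_def, rule sum_mono, rule d1)
  then show "degree (of_int (sign p) * (\<Prod>i\<in>UNIV. [:A$i$p i, B$i$p i:])) \<le> CARD('n)"
  proof -
    have "degree (of_int (sign p) * (\<Prod>i\<in>UNIV. [:A$i$p i, B$i$p i:])) \<le> degree (\<Prod>i\<in>UNIV. [:A$i$p i, B$i$p i:])"
      by (simp add: of_int_poly degree_smult_le)
    then show ?thesis using \<open>degree (\<Prod>i\<in>UNIV. [:A$i$p i, B$i$p i:]) \<le> (\<Sum>i\<in>(UNIV::'n set). 1)\<close> by simp
  qed
qed simp

lemma coeff_prod_lin:
  fixes a b :: "'i \<Rightarrow> 'a::comm_ring_1"
  assumes "finite S"
  shows "coeff (\<Prod>i\<in>S. [:a i, b i:]) 0 = (\<Prod>i\<in>S. a i) \<and>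
         coeff (\<Prod>i\<in>S. [:a i, b i:]) 1 = (\<Sum>k\<in>S. b k * (\<Prod>i\<in>S-{k}. a i))"
  using assms
proof (induction S rule: finite_induct)
  case empty
  then show ?case by simp
next
  case (insert x F)
  have c1: "coeff (p * q) 1 = coeff p 0 * coeff q 1 + coeff p 1 * coeff q 0" for p q :: "'a poly"
    by (simp add: coeff_mult atMost_Suc)
  have e: "(\<Prod>i\<in>insert x F - {k}. a i) = a x * (\<Prod>i\<in>F - {k}. a i)" if "k \<in> F" for k
  proof -
    have "insert x F - {k} = insert x (F - {k})" using that insert(2) by auto
    then show ?thesis using insert(1,2) by simp
  qed
  have e2: "insert x F - {x} = F" using insert by auto
  let ?P = "\<Prod>i\<in>F. [:a i, b i:]"
  have pr: "(\<Prod>i\<in>insert x F. [:a i, b i:]) = [:a x, b x:] * ?P" using insert(1,2) by simp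
  have c0: "coeff (\<Prod>i\<in>insert x F. [:a i, b i:]) 0 = (\<Prod>i\<in>insert x F. a i)"
    unfolding pr using insert by (simp add: coeff_mult)
  have "coeff (\<Prod>i\<in>insert x F. [:a i, b i:]) 1 = a x * coeff ?P 1 + b x * coeff ?P 0"
    unfolding pr c1 by simp
  also have "\<dots> = (\<Sum>k\<in>F. b k * (a x * (\<Prod>i\<in>F-{k}. a i))) + b x * (\<Prod>i\<in>F. a i)"
    using insert(3) by (simp add: sum_distrib_left algebra_simps)
  also have "\<dots> = (\<Sum>k\<in>F. b k * (\<Prod>i\<in>insert x F-{k}. a i)) + b x * (\<Prod>i\<in>insert x F - {x}. a i)"
    using e e2 by simp
  also have "\<dots> = (\<Sum>k\<in>insert x F. b k * (\<Prod>i\<in>insert x F-{k}. a i))"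
    using insert(1,2) by (simp add: add.commute)
  finally show ?case using c0 by simp
qed

lemma coeff1_prod_lin: fixes a b :: "'i \<Rightarrow> 'a::comm_ring_1" shows "finite S \<Longrightarrow> coeff (\<Prod>i\<in>S. [:a i, b i:]) (Suc 0) = (\<Sum>k\<in>S. b k * (\<Prod>i\<in>S-{k}. a i))"
  using coeff_prod_lin[of S a b] by simp

lemma coeff1_detpoly: "coeff (detpoly (A::'a::comm_ring_1^'n^'n) B) 1 = (\<Sum>k\<in>UNIV. det (\<chi> i. if i = k then B$i else A$i))"
proof -
  have "coeff (detpoly A B) 1 = (\<Sum>p\<in>{p. p permutes (UNIV::'n set)}. of_int (sign p) * (\<Sum>k\<in>UNIV. B$k$p k * (\<Prod>i\<in>UNIV-{k}. A$i$p i)))"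
    unfolding detpoly_def by (simp add: coeff_sum coeff1_prod_lin of_int_poly)
  also have "\<dots> = (\<Sum>k\<in>UNIV. \<Sum>p\<in>{p. p permutes (UNIV::'n set)}. of_int (sign p) * (B$k$p k * (\<Prod>i\<in>UNIV-{k}. A$i$p i)))"
    by (simp add: sum_distrib_left sum.swap[where A="{p. p permutes (UNIV::'n set)}"])
  also have "\<dots> = (\<Sum>k\<in>UNIV. det (\<chi> i. if i = k then B$i else A$i))"
  proof (rule sum.cong[OF refl])
    fix k :: 'n
    have "(\<Prod>i\<in>UNIV. (\<chi> i. if i = k then B$i else A$i)$i$p i) = B$k$p k * (\<Prod>i\<in>UNIV-{k}. A$i$p i)" for p
      by (simp add: prod.remove[of UNIV k])
    then show "(\<Sum>p\<in>{p. p permutes (UNIV::'n set)}. of_int (sign p) * (B$k$p k * (\<Prod>i\<in>UNIV-{k}. A$i$p i))) = det (\<chi> i. if i = k then B$i else A$i)"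
      unfolding det_def by simp
  qed
  finally show ?thesis .
qed



lemma skew_iff: "skew_symmetric (x::'a::ring_1^'n^'n) \<longleftrightarrow> (\<forall>i j. x$j$i = - x$i$j)"
  unfolding skew_symmetric_def transpose_def vec_eq_iff by auto

lemma det_scale: "det (\<chi> i j. k * (A::'a::comm_ring_1^'n^'n)$i$j) = k ^ CARD('n) * det A"
  unfolding det_def by (simp add: prod.distrib sum_distrib_left algebra_simps)

lemma det_scaled_invariant:
  fixes c w :: "'a::field^'n^'n"
  assumes H: "\<forall>y. skew_symmetric y \<longrightarrow> det (c + y) = det y"
    and w: "skew_symmetric w"
  shows "det (\<chi> i j. w$i$j + t * c$i$j) = det w"
proof (cases "t = 0")
  case True
  have "(\<chi> i j. w$i$j + t * c$i$j) = w" using True by (simp add: vec_eq_iff)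
  then show ?thesis by simp
next
  case False
  define y where "y = (\<chi> i j. (1/t) * w$i$j)"
  have sy: "skew_symmetric y" unfolding skew_iff
  proof (intro allI)
    fix i j
    have "w$j$i = - w$i$j" using w unfolding skew_iff by blast
    then show "y$j$i = - y$i$j" unfolding y_def by simp
  qed
  have "(\<chi> i j. w$i$j + t * c$i$j) = (\<chi> i j. t * (c + y)$i$j)"
    using False by (simp add: vec_eq_iff y_def distrib_left)
  then have "det (\<chi> i j. w$i$j + t * c$i$j) = det (\<chi> i j. t * (c + y)$i$j)"
    by (simp only:)
  also have "\<dots> = t ^ CARD('n) * det (c + y)" by (rule det_scale)
  also have "\<dots> = t ^ CARD('n) * det y" using H sy by simp
  also have "\<dots> = t ^ CARD('n) * ((1/t) ^ CARD('n) * det w)"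
    unfolding y_def det_scale by simp
  also have "\<dots> = (t * (1/t)) ^ CARD('n) * det w" by (simp only: power_mult_distrib mult.assoc)
  also have "\<dots> = det w" using False by simp
  finally show ?thesis .
qed

lemma row_replace_det:
  fixes w v c :: "'a::field^'n^'n"
  assumes vw: "v ** w = mat 1"
  shows "det (\<chi> i. if i = k then c$i else w$i) = (\<Sum>l\<in>UNIV. c$k$l * v$l$k) * det w"
proof -
  define x where "x = (\<chi> m. \<Sum>l\<in>UNIV. c$k$l * v$l$m)"
  have "(\<Sum>m\<in>UNIV. x$m *s row m w) = c$k"
  proof -
    have "(\<Sum>m\<in>UNIV. x$m *s row m w)$j = c$k$j" for j
    proof -
      have "(\<Sum>m\<in>UNIV. x$m *s row m w)$j = (\<Sum>m\<in>UNIV. \<Sum>l\<in>UNIV. c$k$l * v$l$m * w$m$j)"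
        by (simp add: x_def row_def sum_distrib_right)
      also have "\<dots> = (\<Sum>l\<in>UNIV. c$k$l * (\<Sum>m\<in>UNIV. v$l$m * w$m$j))"
        by (subst sum.swap) (simp add: sum_distrib_left mult.assoc)
      also have "\<dots> = (\<Sum>l\<in>UNIV. c$k$l * (v ** w)$l$j)"
        by (simp add: matrix_matrix_mult_def)
      also have "\<dots> = c$k$j" by (simp add: vw mat_def if_distrib cong: if_cong)
      finally show ?thesis .
    qed
    then show ?thesis by (simp add: vec_eq_iff)
  qed
  then have "(\<chi> i. if i = k then c$i else w$i) = (\<chi> i. if i = k then (\<Sum>m\<in>UNIV. x$m *s row m w) else row i w)"
    by (simp add: vec_eq_iff row_def)
  then have "det (\<chi> i. if i = k then c$i else w$i) = x$k * det w"
    using cramer_lemma_transpose[of k x w] by simp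
  then show ?thesis by (simp add: x_def)
qed



lemma pairing_exists:
  assumes ev: "even CARD('n::finite)" and ij: "(i::'n) \<noteq> j"
  shows "\<exists>\<sigma> (s::'n \<Rightarrow> bool). (\<forall>k. \<sigma> (\<sigma> k) = k) \<and> \<sigma> i = j \<and> (\<forall>k. s (\<sigma> k) = (\<not> s k)) \<and> s i"
proof -
  let ?N = "CARD('n)"
  let ?R = "UNIV - {i,j} :: 'n set"
  obtain h where h: "bij_betw h ?R {0..<card ?R}" using ex_bij_betw_finite_nat[of ?R] by auto
  have cR: "card ?R = ?N - 2" using ij by (simp add: card_Diff_subset)
  define f where "f k = (if k = i then 0 else if k = j then 1 else h k + 2)" for k
  have hR: "h k < ?N - 2" if "k \<in> ?R" for k using h that cR by (auto simp: bij_betw_def)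
  have N2: "?N \<ge> 2"
  proof -
    have "card {i,j} \<le> ?N" by (rule card_mono) auto
    then show ?thesis using ij by simp
  qed
  have fN: "f k < ?N" for k
  proof (cases "k \<in> ?R")
    case True
    then have "h k < ?N - 2" by (rule hR)
    then show ?thesis using True N2 unfolding f_def by auto
  next
    case False
    then show ?thesis using N2 unfolding f_def by auto
  qed
  have hinj: "inj_on h ?R" using h by (simp add: bij_betw_def)
  have finj: "inj f"
  proof (rule injI)
    fix x y assume e: "f x = f y"
    show "x = y"
    proof (cases "x \<in> ?R \<and> y \<in> ?R")
      case True
      then have "h x = h y" using e by (simp add: f_def)
      then show ?thesis using hinj True by (meson inj_onD)
    next
      case False
      then show ?thesis using e ij by (auto simp: f_def split: if_splits)
    qed
  qed
  have fsurj: "\<exists>k. f k = m" if "m < ?N" for m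
  proof (cases "m < 2")
    case True
    then have "m = 0 \<or> m = 1" by auto
    then show ?thesis unfolding f_def using ij by (metis)
  next
    case False
    then have "m - 2 \<in> {0..<card ?R}" using that cR by auto
    then obtain k where k: "k \<in> ?R" "h k = m - 2" using h unfolding bij_betw_def by (metis imageE)
    then have "f k = m" using False by (auto simp: f_def)
    then show ?thesis by blast
  qed
  define pk where "pk m = (if even m then m + 1 else m - 1)" for m :: nat
  have pkN: "pk m < ?N" if "m < ?N" for m
  proof (cases "even m")
    case True
    have "m + 1 \<noteq> ?N"
    proof
      assume "m + 1 = ?N"
      then have "even (m + 1)" using ev by simp
      then show False using True by simp
    qed
    then show ?thesis using True that unfolding pk_def by simp
  next
    case False
    then show ?thesis using that unfolding pk_def by simp
  qed
  define \<sigma> where "\<sigma> k = inv f (pk (f k))" for k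
  have fs: "f (\<sigma> k) = pk (f k)" for k
  proof -
    obtain k' where "f k' = pk (f k)" using fsurj pkN fN by blast
    then show ?thesis unfolding \<sigma>_def by (metis f_inv_into_f rangeI)
  qed
  have pkpk: "pk (pk m) = m" for m unfolding pk_def by auto
  have ss: "\<sigma> (\<sigma> k) = k" for k using finj fs pkpk by (metis injD)
  have "f (\<sigma> i) = f j" using fs[of i] ij by (simp add: f_def pk_def)
  then have sij: "\<sigma> i = j" using finj by (meson injD)
  show ?thesis
  proof (intro exI conjI allI)
    show "\<sigma> (\<sigma> k) = k" for k by (rule ss)
    show "\<sigma> i = j" by (rule sij)
    show "even (f (\<sigma> k)) = (\<not> even (f k))" for k unfolding fs pk_def by auto
    show "even (f i)" by (simp add: f_def)
  qed
qed


lemma key_trace: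
  fixes c w v :: "'a::field^'n^'n"
  assumes H: "\<forall>y. skew_symmetric y \<longrightarrow> det (c + y) = det y"
    and big: "infinite (UNIV :: 'a set) \<or> card (UNIV :: 'a set) \<ge> CARD('n)^2 + 1"
    and w: "skew_symmetric w" and vw: "v ** w = mat 1"
  shows "(\<Sum>k\<in>UNIV. \<Sum>l\<in>UNIV. c$k$l * v$l$k) = 0"
proof -
  define P where "P = detpoly w c"
  define Q where "Q = P - [:det w:]"
  have pQ: "poly Q t = 0" for t
  proof -
    have "poly P t = det w" unfolding P_def poly_detpoly by (rule det_scaled_invariant[OF H w])
    then show ?thesis unfolding Q_def by simp
  qed
  have Q0: "Q = 0"
  proof (rule ccontr)
    assume nz: "Q \<noteq> 0"
    have U: "{x. poly Q x = 0} = UNIV" using pQ by auto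
    have fin: "finite (UNIV :: 'a set)" using poly_roots_finite[OF nz] U by simp
    have "card (UNIV :: 'a set) \<le> degree Q" using card_poly_roots_bound[OF nz] U by simp
    also have "degree Q \<le> max (degree P) (degree [:det w:])" unfolding Q_def by (rule degree_diff_le_max)
    also have "\<dots> \<le> CARD('n)" using degree_detpoly[of w c] unfolding P_def by simp
    finally have le: "card (UNIV :: 'a set) \<le> CARD('n)" .
    have "CARD('n) \<le> CARD('n)^2" by (simp add: power2_eq_square)
    then show False using big fin le by linarith
  qed
  have "coeff P 1 = coeff Q 1 + coeff [:det w:] 1" unfolding Q_def by simp
  then have "coeff P 1 = 0" using Q0 by simp
  then have "(\<Sum>k\<in>UNIV. det (\<chi> i. if i = k then c$i else w$i)) = 0"
    unfolding P_def coeff1_detpoly .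
  then have "(\<Sum>k\<in>UNIV. (\<Sum>l\<in>UNIV. c$k$l * v$l$k) * det w) = 0"
    using row_replace_det[OF vw] by simp
  then have "(\<Sum>k\<in>UNIV. \<Sum>l\<in>UNIV. c$k$l * v$l$k) * det w = 0"
    by (simp add: sum_distrib_right)
  moreover have "det w \<noteq> 0"
  proof
    assume "det w = 0"
    then have "det (v ** w) = 0" by (simp add: det_mul)
    then show False using vw by simp
  qed
  ultimately show ?thesis by simp
qed


theorem lemma2p4:
  fixes a b :: "'a::field ^'n::finite^'n"
  assumes "even CARD('n)"
    and "(2::'a) \<noteq> 0"
    and "infinite (UNIV :: 'a set) \<or> card (UNIV :: 'a set) \<ge> CARD('n)^2 + 1"
    and "skew_symmetric a" and "skew_symmetric b"
    and "\<forall>x. skew_symmetric x \<longrightarrow> det (a + x) = det (b + x)"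
  shows "a = b"
proof (rule ccontr)
  assume neq: "a \<noteq> b"
  define c where "c = a - b"
  have skc: "c$j$i = - c$i$j" for i j
  proof -
    have "a$j$i = - a$i$j" using assms(4) unfolding skew_iff by blast
    moreover have "b$j$i = - b$i$j" using assms(5) unfolding skew_iff by blast
    ultimately show ?thesis unfolding c_def by simp
  qed
  have H: "\<forall>y. skew_symmetric y \<longrightarrow> det (c + y) = det y"
  proof (intro allI impI)
    fix y :: "'a^'n^'n" assume sy: "skew_symmetric y"
    have "skew_symmetric (y - b)" unfolding skew_iff
    proof (intro allI)
      fix i j
      have "y$j$i = - y$i$j" using sy unfolding skew_iff by blast
      moreover have "b$j$i = - b$i$j" using assms(5) unfolding skew_iff by blast
      ultimately show "(y - b)$j$i = - (y - b)$i$j" by simp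
    qed
    then have "det (a + (y - b)) = det (b + (y - b))" using assms(6) by blast
    moreover have "a + (y - b) = c + y" unfolding c_def by (simp add: algebra_simps)
    moreover have "b + (y - b) = y" by simp
    ultimately show "det (c + y) = det y" by simp
  qed
  have "c \<noteq> 0" using neq unfolding c_def by simp
  then obtain i where "c$i \<noteq> 0" by (auto simp: vec_eq_iff)
  then obtain j where cij: "c$i$j \<noteq> 0" by (auto simp: vec_eq_iff)
  have ij: "i \<noteq> j"
  proof
    assume "i = j"
    have "c$i$i = - c$i$i" by (rule skc)
    then have "c$i$j = - c$i$j" using \<open>i = j\<close> by (simp only:)
    then have "2 * c$i$j = 0" by (simp only: mult_2) (metis add_eq_0_iff)
    then show False using cij assms(2) by simp
  qed
  obtain \<sigma> s where ss: "\<And>k. \<sigma> (\<sigma> k) = k" and sij: "\<sigma> i = j"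
    and sflip: "\<And>k. s (\<sigma> k) = (\<not> s k)" and si: "s i"
    using pairing_exists[OF assms(1) ij] by blast
  have sji: "\<sigma> j = i" using ss[of i] sij by simp
  define sg where "sg k = (if s k then 1 else - 1 :: 'a)" for k
  define wt where "wt x y k = (if k = i \<or> k = j then x else y :: 'a)" for x y k
  define G where "G x y = (\<chi> k l. if l = \<sigma> k then sg k * wt x y k else 0)" for x y
  have sgs: "sg (\<sigma> k) = - sg k" for k unfolding sg_def using sflip[of k] by simp
  have wts: "wt x y (\<sigma> k) = wt x y k" for x y k
  proof -
    have "(\<sigma> k = i \<or> \<sigma> k = j) = (k = i \<or> k = j)"
      using ss[of k] sij sji by metis
    then show ?thesis unfolding wt_def by simp
  qed
  have skG: "skew_symmetric (G x y)" for x y unfolding skew_iff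
  proof (intro allI)
    fix k l
    show "G x y $ l $ k = - G x y $ k $ l"
    proof (cases "l = \<sigma> k")
      case True
      then have "k = \<sigma> l" using ss by simp
      then show ?thesis using True unfolding G_def by (simp add: sgs wts)
    next
      case False
      then have "k \<noteq> \<sigma> l" using ss by auto
      then show ?thesis using False unfolding G_def by simp
    qed
  qed
  have prodG: "G x y ** G x' y' = (\<chi> k m. if m = k then - (wt x y k * wt x' y' k) else 0)" for x y x' y'
  proof -
    have "(G x y ** G x' y')$k$m = (if m = k then - (wt x y k * wt x' y' k) else 0)" for k m
    proof -
      have "(G x y ** G x' y')$k$m = (\<Sum>l\<in>UNIV. if l = \<sigma> k then sg k * wt x y k * G x' y' $ l $ m else 0)"
      proof -
        have Ge: "G x y $ k $ l = (if l = \<sigma> k then sg k * wt x y k else 0)" for l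
          unfolding G_def by simp
        show ?thesis unfolding matrix_matrix_mult_def
          by (simp only: vec_lambda_beta Ge) (intro sum.cong refl, simp)
      qed
      also have "\<dots> = sg k * wt x y k * G x' y' $ (\<sigma> k) $ m" by simp
      also have "\<dots> = (if m = k then - (wt x y k * wt x' y' k) else 0)"
      proof -
        have sg2: "sg k * sg k = 1" by (simp add: sg_def)
        have "sg k * wt x y k * (- sg k * wt x' y' k) = - (sg k * sg k) * (wt x y k * wt x' y' k)"
          by (simp add: algebra_simps)
        then show ?thesis unfolding G_def using sg2 by (simp add: ss sgs wts)
      qed
      finally show ?thesis .
    qed
    then show ?thesis by (simp add: vec_eq_iff)
  qed
  have inv: "G x 1 ** G (-1/x) (-1) = mat 1" if "x \<noteq> 0" for x
    unfolding prodG using that by (simp add: vec_eq_iff mat_def wt_def)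
  have T0: "(\<Sum>k\<in>UNIV. \<Sum>l\<in>UNIV. c$k$l * G x 1 $l$k) = 0" if "x \<noteq> 0" for x
    by (rule key_trace[OF H assms(3) skG inv[OF that]])
  define g where "g l = c$(\<sigma> l)$l * sg l" for l
  have Tx: "(\<Sum>k\<in>UNIV. \<Sum>l\<in>UNIV. c$k$l * G x 1 $l$k) = (\<Sum>l\<in>UNIV. g l * wt x 1 l)" for x
  proof -
    have "(\<Sum>k\<in>UNIV. \<Sum>l\<in>UNIV. c$k$l * G x 1 $l$k) = (\<Sum>l\<in>UNIV. \<Sum>k\<in>UNIV. c$k$l * G x 1 $l$k)"
      by (rule sum.swap)
    also have "\<dots> = (\<Sum>l\<in>UNIV. \<Sum>k\<in>UNIV. if k = \<sigma> l then c$k$l * (sg l * wt x 1 l) else 0)"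
      unfolding G_def by (intro sum.cong refl) simp
    also have "\<dots> = (\<Sum>l\<in>UNIV. g l * wt x 1 l)" unfolding g_def by (simp add: mult.assoc)
    finally show ?thesis .
  qed
  have "(\<Sum>l\<in>UNIV. g l * wt 2 1 l) - (\<Sum>l\<in>UNIV. g l * wt 1 1 l) = 0"
    using T0[of 2] T0[of 1] assms(2) unfolding Tx by simp
  then have "(\<Sum>l\<in>UNIV. g l * (if l \<in> {i,j} then 1 else 0)) = 0"
  proof -
    have eq: "g l * wt 2 1 l - g l * wt 1 1 l = g l * (if l \<in> {i,j} then 1 else 0)" for l
      by (simp add: wt_def mult_2_right)
    show ?thesis using \<open>(\<Sum>l\<in>UNIV. g l * wt 2 1 l) - (\<Sum>l\<in>UNIV. g l * wt 1 1 l) = 0\<close>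
      unfolding sum_subtractf[symmetric] eq .
  qed
  moreover have "(\<Sum>l\<in>UNIV. g l * (if l \<in> {i,j} then 1 else 0)) = (\<Sum>l\<in>UNIV. if l \<in> {i,j} then g l else 0)"
    by (intro sum.cong) auto
  moreover have "(\<Sum>l\<in>(UNIV::'n set). if l \<in> {i,j} then g l else 0) = sum g (UNIV \<inter> {i,j})"
    by (rule sum.inter_restrict[symmetric]) simp
  ultimately have "(\<Sum>l\<in>{i,j}. g l) = 0" by simp
  then have "g i + g j = 0" using ij by simp
  moreover have "g i = c$j$i" unfolding g_def sg_def using sij si by simp
  moreover have "\<not> s j" using sflip[of i] sij si by simp
  then have "g j = - c$i$j" unfolding g_def sg_def using sji by simp
  ultimately have "c$j$i + - c$i$j = 0" by simp
  moreover have e1: "c$j$i = - c$i$j" by (rule skc)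
  ultimately have "- c$i$j + - c$i$j = 0" by (simp only: e1)
  then have "c$i$j + c$i$j = 0" by (metis minus_add_distrib neg_equal_0_iff_equal)
  then have "2 * c$i$j = 0" by (simp only: mult_2)
  then show False using cij assms(2) by simp
qed

end
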